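(* Let $S_1 = A_3^*$ be the set of nonnegative integers whose base-$3$ expansion contains no digit $2$, and for $n\ge 2$ let $S_n$ be the set of positive integers $k$ such that $v_p(k)\in S_{n-1}$ for each prime $p\mid k$. Then for each $n$, $S_n$ has lower uniform density $0$.
   Context: The lower uniform density of $A\subseteq\mathbb{N}$ is $\underline{u}(A) = \lim_{s\to\infty} \min_{n\ge 0} \frac{1}{s}\,\#\{a\in A : n < a \le n+s\}$. *)

theory Defs
  imports Complex_Main "HOL-Computational_Algebra.Primes"
begin

text \<open>Lower uniform density of a set of naturals:
  lim_{s->oo} min_{n>=0} (1/s) #{a in A. n < a <= n+s}.
  The min over n is rendered as INF (it is attained since the values lie in a finite set).\<close>
definition window_min :: "nat set \<Rightarrow> nat \<Rightarrow> real" where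
  "window_min A s = (INF n::nat. real (card {a \<in> A. n < a \<and> a \<le> n + s}) / real s)"

definition has_lower_uniform_density :: "nat set \<Rightarrow> real \<Rightarrow> bool" where
  "has_lower_uniform_density A d \<longleftrightarrow> (window_min A \<longlongrightarrow> d) sequentially"

definition A3 :: "nat set" where
  "A3 = {k. \<forall>i::nat. (k div 3 ^ i) mod 3 \<noteq> 2}"

text \<open>S n for n >= 1 (S 0 is a dummy, set equal to A3).\<close>
fun S :: "nat \<Rightarrow> nat set" where
  "S 0 = A3"
| "S (Suc 0) = A3"
| "S (Suc (Suc n)) =
     {k. k > 0 \<and> (\<forall>p. prime p \<and> p dvd k \<longrightarrow> multiplicity p k \<in> S (Suc n))}"

end

theory Submission
  imports Defs "HOL-Number_Theory.Cong" "HOL-Library.Infinite_Set"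
begin

lemma density_zero_if_gaps:
  assumes "\<And>s. \<exists>n. \<forall>a. n < a \<and> a \<le> n + s \<longrightarrow> a \<notin> A"
  shows "has_lower_uniform_density A 0"
proof -
  have "window_min A s = 0" for s
  proof -
    obtain n where n: "\<forall>a. n < a \<and> a \<le> n + s \<longrightarrow> a \<notin> A" using assms by blast
    have e: "{a \<in> A. n < a \<and> a \<le> n + s} = {}" using n by auto
    let ?f = "\<lambda>n::nat. real (card {a \<in> A. n < a \<and> a \<le> n + s}) / real s"
    have "?f n = 0" using e by simp
    moreover have "\<forall>m. 0 \<le> ?f m" by simp
    have bb: "bdd_below (range ?f)" by (rule bdd_belowI2[where m=0]) simp
    have "(INF m. ?f m) \<le> 0" using cINF_lower2[OF bb, of n 0] \<open>?f n = 0\<close> by simp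
    moreover have "(INF m. ?f m) \<ge> 0" by (rule cINF_greatest) auto
    ultimately have "(INF m. ?f m) = 0" by linarith
    thus ?thesis unfolding window_min_def .
  qed
  hence "window_min A = (\<lambda>_. 0)" by auto
  thus ?thesis unfolding has_lower_uniform_density_def by simp
qed

lemma A3_gaps: "\<exists>n. \<forall>a. n < a \<and> a \<le> n + s \<longrightarrow> a \<notin> A3"
proof (intro exI allI impI)
  fix a assume a: "2 * 3^s < a \<and> a \<le> 2 * 3^s + s"
  have "s < 3^s" by (induct s) auto
  hence "a < 3 * 3^s" using a by linarith
  hence "a div 3^s = 2" using a by (simp add: div_nat_eqI)
  thus "a \<notin> A3" unfolding A3_def by (auto intro!: exI[of _ s])
qed

fun b :: "nat \<Rightarrow> nat" where
  "b 0 = 2" | "b (Suc 0) = 2" | "b (Suc (Suc j)) = 2 ^ b (Suc j)"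

lemma b_bad: "j \<ge> 1 \<Longrightarrow> b j \<notin> S j \<and> b j \<ge> 1"
proof (induct j)
  case 0 then show ?case by simp
next
  case (Suc j)
  show ?case
  proof (cases j)
    case 0
    have "(2::nat) \<notin> A3" unfolding A3_def by (auto intro!: exI[of _ 0])
    then show ?thesis using 0 by simp
  next
    case (Suc i)
    have IH: "b (Suc i) \<notin> S (Suc i)" "b (Suc i) \<ge> 1" using Suc.hyps Suc by simp_all
    have dv: "2 dvd (2::nat) ^ b (Suc i)" using IH(2) by (simp add: dvd_power)
    have "multiplicity 2 ((2::nat) ^ b (Suc i)) = b (Suc i)"
      by (simp add: prime_elem_nat_iff)
    hence "2 ^ b (Suc i) \<notin> S (Suc (Suc i))" using IH dv by (auto intro!: exI[of _ 2])
    then show ?thesis using Suc by simp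
  qed
qed

lemma mult_gaps:
  fixes m s :: nat
  assumes m: "m \<ge> 1" and bad: "m \<notin> T"
  shows "\<exists>n. \<forall>a. n < a \<and> a \<le> n + s \<longrightarrow>
     a \<notin> {k. k > 0 \<and> (\<forall>p. prime p \<and> p dvd k \<longrightarrow> multiplicity p k \<in> T)}"
proof -
  define P where "P = {p::nat. prime p}"
  have inf: "infinite P" using primes_infinite P_def by simp
  define q where "q i = enumerate P i" for i
  have qp: "prime (q i)" for i using enumerate_in_set[OF inf] unfolding q_def P_def by auto
  have qinj: "i \<noteq> j \<Longrightarrow> q i \<noteq> q j" for i j
    unfolding q_def using enumerate_mono[OF _ inf] by (metis less_linear less_not_refl)
  define M where "M i = q i ^ Suc m" for i
  define u where "u i = q i ^ m + i * (q i ^ Suc m - 1)" for i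
  have cop: "\<forall>i\<in>{1..s::nat}. \<forall>j\<in>{1..s}. i \<noteq> j \<longrightarrow> coprime (M i) (M j)"
    unfolding M_def using qp qinj by (auto simp: primes_coprime)
  obtain x where x: "\<forall>i\<in>{1..s}. [x = u i] (mod M i)"
    using chinese_remainder_nat[OF _ cop] by blast
  show ?thesis
  proof (intro exI allI impI)
    fix a assume a: "x < a \<and> a \<le> x + s"
    define i where "i = a - x"
    have i: "i \<in> {1..s}" "a = x + i" using a i_def by auto
    let ?p = "q i"
    have p2: "?p \<ge> 2" using qp prime_ge_2_nat by blast
    have pos: "?p ^ Suc m \<ge> 1" using p2 by simp
    have "[x + i = u i + i] (mod M i)" using x i by (simp add: cong_add)
    moreover have "u i + i = ?p ^ m + i * ?p ^ Suc m"
    proof -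
      have "\<And>X::nat. X \<ge> 1 \<Longrightarrow> i * (X - 1) + i = i * X" by (case_tac X) simp_all
      from this[OF pos] show ?thesis unfolding u_def by simp
    qed
    moreover have "[?p ^ m + i * ?p ^ Suc m = ?p ^ m] (mod M i)"
      unfolding M_def by (simp add: cong_def)
    ultimately have c: "[a = ?p ^ m] (mod ?p ^ Suc m)" using i M_def
      by (metis cong_trans)
    have "?p ^ m dvd ?p ^ Suc m" by simp
    hence d1: "?p ^ m dvd a" using c
      by (metis cong_dvd_iff cong_dvd_modulus_nat dvd_refl)
    have d2: "\<not> ?p ^ Suc m dvd a"
    proof
      assume "?p ^ Suc m dvd a"
      hence "?p ^ Suc m dvd ?p ^ m" using c cong_dvd_iff by blast
      moreover have "?p ^ m < ?p ^ Suc m" using p2 by simp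
      moreover have "?p ^ m > 0" using p2 by simp
      ultimately show False by (meson dvd_imp_le not_le)
    qed
    have mu: "multiplicity ?p a = m" by (rule multiplicity_eqI[OF d1 d2])
    have "?p dvd a" using d1 m dvd_power[of m "q i"] dvd_trans by (metis not_one_le_zero neq0_conv)
    thus "a \<notin> {k. k > 0 \<and> (\<forall>p. prime p \<and> p dvd k \<longrightarrow> multiplicity p k \<in> T)}"
      using mu bad qp by blast
  qed
qed

theorem mainTheorem9:
  fixes n :: nat
  assumes "n \<ge> 1"
  shows "has_lower_uniform_density (S n) 0"
proof (rule density_zero_if_gaps)
  fix s
  show "\<exists>n'. \<forall>a. n' < a \<and> a \<le> n' + s \<longrightarrow> a \<notin> S n"
  proof (cases n)
    case 0 then show ?thesis using assms by simp
  next
    case (Suc k)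
    show ?thesis
    proof (cases k)
      case 0 then show ?thesis using Suc A3_gaps by simp
    next
      case (Suc j)
      have "b (Suc j) \<notin> S (Suc j) \<and> b (Suc j) \<ge> 1" using b_bad by simp
      then show ?thesis using mult_gaps[of "b (Suc j)" "S (Suc j)" s] Suc \<open>n = Suc k\<close> by simp
    qed
  qed
qed

end
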